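(* Assume $K<\alpha m\underline h\,\underline c/\bar\rho_s$. As $(\xi,\eta)\to(0,0)$ with $\eta^2=o(\xi)$, the eigenvalues of $A(\xi,\eta)$ satisfy $$\lambda^1=-\Big(K+\frac{\alpha n\underline h\underline c}{\bar\rho_s}-\frac{\alpha m\underline h\underline c}{\bar\rho_s}\Big)\xi^2-\Big(K-\frac{\alpha m\underline h\underline c}{\bar\rho_s}\Big)\eta^2+o(\xi^2+\eta^2),$$ $$\lambda^2=-i\xi\tan\theta-\alpha\underline h(\xi^2+\eta^2)+o(\xi^2+\eta^2),\qquad \lambda^3=-a+o(1).$$ Consequently, at these frequencies the system is (to leading order) spectrally stable if and only if $$\big(K\bar\rho_s+\alpha\underline h\underline c(n-m)\big)\xi^2>\big(\alpha m\underline h\underline c-K\bar\rho_s\big)\eta^2;$$ in particular, if $K<\alpha(m-n)\underline h\underline c/\bar\rho_s$, the system is spectrally unstable at these frequencies.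
   Context: Parameters: $\theta\in(0,\pi/2)$, $\alpha>0$, $K\ge0$, $m,n>0$, $e,s>0$, $\bar\rho_s>0$, $\underline h>0$, $\underline c=\frac{e}{s}\underline h^m\tan^n\theta$, $a=\frac{s\bar\rho_s}{e\underline h}$. Symbol $A(\xi,\eta)=A_0+i\xi A_1-(\xi^2+\eta^2)A_2$ with $$A_0=\begin{pmatrix}0&0&0\\ \frac{am\underline c}{\underline h}&-a&0\\ -\frac{am\underline c}{\bar\rho_s}&\frac{a\underline h}{\bar\rho_s}&0\end{pmatrix},\ A_1=\begin{pmatrix}-\tan\theta&0&0\\ -\frac{\alpha an\underline c}{\tan\theta}&-\tan\theta&-\frac{\alpha an\underline c}{\tan\theta}\\ \frac{\alpha an\underline h\underline c}{\bar\rho_s\tan\theta}&0&\frac{\alpha an\underline h\underline c}{\bar\rho_s\tan\theta}\end{pmatrix},\ A_2=\begin{pmatrix}\alpha\underline h&0&\alpha\underline h\\0&0&0\\0&0&K\end{pmatrix}.$$ It is the Fourier symbol of the linearization about the constant state $(\underline h,\underline c,0)$ of the nondimensional erosion model. Spectrally stable at $(\xi,\eta)$ means all eigenvalues of $A(\xi,\eta)$ have strictly negative real part. *)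

theory Defs
  imports "HOL-Analysis.Analysis"
begin

text \<open>Constants of the linearised erosion model.  Parameters are listed in the
order theta alpha K m n e s rho_s h (h = underline h, rho_s = bar rho_s).\<close>

definition cbar :: "real \<Rightarrow> real \<Rightarrow> real \<Rightarrow> real \<Rightarrow> real \<Rightarrow> real \<Rightarrow> real" where
  "cbar \<theta> m n e s h = e / s * h powr m * tan \<theta> powr n"

definition acoef :: "real \<Rightarrow> real \<Rightarrow> real \<Rightarrow> real \<Rightarrow> real" where
  "acoef e s \<rho> h = s * \<rho> / (e * h)"

definition A0 :: "real \<Rightarrow> real \<Rightarrow> real \<Rightarrow> real \<Rightarrow> real \<Rightarrow> complex^3^3" where
  "A0 a m c h \<rho> = vector [
     vector [0, 0, 0],
     vector [of_real (a * m * c / h), of_real (- a), 0],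
     vector [of_real (- a * m * c / \<rho>), of_real (a * h / \<rho>), 0]]"

definition A1 :: "real \<Rightarrow> real \<Rightarrow> real \<Rightarrow> real \<Rightarrow> real \<Rightarrow> real \<Rightarrow> real \<Rightarrow> complex^3^3" where
  "A1 \<theta> \<alpha> a n c h \<rho> = vector [
     vector [of_real (- tan \<theta>), 0, 0],
     vector [of_real (- \<alpha> * a * n * c / tan \<theta>), of_real (- tan \<theta>), of_real (- \<alpha> * a * n * c / tan \<theta>)],
     vector [of_real (\<alpha> * a * n * h * c / (\<rho> * tan \<theta>)), 0, of_real (\<alpha> * a * n * h * c / (\<rho> * tan \<theta>))]]"

definition A2 :: "real \<Rightarrow> real \<Rightarrow> real \<Rightarrow> complex^3^3" where
  "A2 \<alpha> h K = vector [
     vector [of_real (\<alpha> * h), 0, of_real (\<alpha> * h)],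
     vector [0, 0, 0],
     vector [0, 0, of_real K]]"

definition symbolA ::
  "real \<Rightarrow> real \<Rightarrow> real \<Rightarrow> real \<Rightarrow> real \<Rightarrow> real \<Rightarrow> real \<Rightarrow> real \<Rightarrow> real \<Rightarrow> real \<Rightarrow> real \<Rightarrow> complex^3^3" where
  "symbolA \<theta> \<alpha> K m n e s \<rho> h \<xi> \<eta> =
     (let c = cbar \<theta> m n e s h; a = acoef e s \<rho> h in
      \<chi> i j. A0 a m c h \<rho> $ i $ j + \<i> * of_real \<xi> * A1 \<theta> \<alpha> a n c h \<rho> $ i $ j
             - of_real (\<xi>\<^sup>2 + \<eta>\<^sup>2) * A2 \<alpha> h K $ i $ j)"

definition spectrally_stable :: "complex^'n^'n \<Rightarrow> bool" where
  "spectrally_stable M \<longleftrightarrow> (\<forall>z. det (mat z - M) = 0 \<longrightarrow> Re z < 0)"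

definition lead1 :: "real \<Rightarrow> real \<Rightarrow> real \<Rightarrow> real \<Rightarrow> real \<Rightarrow> real \<Rightarrow> real \<Rightarrow> real \<Rightarrow> real \<Rightarrow> real \<Rightarrow> real \<Rightarrow> complex" where
  "lead1 \<theta> \<alpha> K m n e s \<rho> h \<xi> \<eta> =
     (let c = cbar \<theta> m n e s h in
      of_real (- (K + \<alpha> * n * h * c / \<rho> - \<alpha> * m * h * c / \<rho>) * \<xi>\<^sup>2
               - (K - \<alpha> * m * h * c / \<rho>) * \<eta>\<^sup>2))"

definition lead2 :: "real \<Rightarrow> real \<Rightarrow> real \<Rightarrow> real \<Rightarrow> real \<Rightarrow> complex" where
  "lead2 \<theta> \<alpha> h \<xi> \<eta> \<equiv> - \<i> * of_real (\<xi> * tan \<theta>) - of_real (\<alpha> * h * (\<xi>\<^sup>2 + \<eta>\<^sup>2))"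

end

theory Submission
  imports Defs "HOL-Complex_Analysis.Cauchy_Integral_Formula"
begin


lemma cubic_roots:
  fixes c0 c1 c2 :: complex
  shows "\<exists>r1 r2 r3. cmod r1 \<le> cmod r2 \<and> cmod r2 \<le> cmod r3 \<and>
     c2 = -(r1+r2+r3) \<and> c1 = r1*r2+r1*r3+r2*r3 \<and> c0 = -(r1*r2*r3)"
proof -
  define a where "a = (\<lambda>i::nat. if i = 0 then c0 else if i = 1 then c1 else if i = 2 then c2 else 1)"
  have "\<exists>i \<in> {1..3}. a i \<noteq> 0" by (rule bexI[of _ 3]) (auto simp: a_def)
  then obtain r where "(\<Sum>i\<le>3. a i * r^i) = 0"
    using fundamental_theorem_of_algebra[of a 3] by blast
  hence r: "r^3 + c2*r^2 + c1*r + c0 = 0"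
    by (simp add: a_def eval_nat_numeral algebra_simps)
  define B where "B = c2 + r"
  define C where "C = c1 + r*(c2+r)"
  define d where "d = csqrt (B^2 - 4*C)"
  define p1 where "p1 = (-B + d)/2"
  define p2 where "p2 = (-B - d)/2"
  have d2: "d^2 = B^2 - 4*C" by (simp add: d_def)
  have s: "p1 + p2 = -B" by (simp add: p1_def p2_def field_simps)
  have pr: "p1 * p2 = C" 
  proof -
    have "p1*p2 = (B^2 - d^2)/4" by (simp add: p1_def p2_def field_simps power2_eq_square)
    thus ?thesis by (simp add: d2)
  qed
  have v2: "c2 = -(p1+p2+r)" using s by (simp add: B_def)
  have v1: "c1 = p1*p2+p1*r+p2*r"
  proof -
    have e1: "c2 + r = -(p1+p2)" using s by (simp add: B_def)
    have "c1 = C - r*(c2+r)" by (simp add: C_def)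
    also have "\<dots> = p1*p2+p1*r+p2*r" unfolding e1 pr[symmetric] by (simp add: algebra_simps)
    finally show ?thesis .
  qed
  have v0: "c0 = -(p1*p2*r)"
  proof -
    have "c0 = -(r^3 + c2*r^2 + c1*r)" using r by (simp add: algebra_simps add_eq_0_iff)
    thus ?thesis using v1 v2 by (simp add: algebra_simps power2_eq_square power3_eq_cube)
  qed
  let ?P = "\<lambda>r1 r2 r3. cmod r1 \<le> cmod r2 \<and> cmod r2 \<le> cmod r3 \<and>
     c2 = -(r1+r2+r3) \<and> c1 = r1*r2+r1*r3+r2*r3 \<and> c0 = -(r1*r2*r3)"
  have "?P p1 p2 r \<or> ?P p1 r p2 \<or> ?P p2 p1 r \<or> ?P p2 r p1 \<or> ?P r p1 p2 \<or> ?P r p2 p1"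
    using v0 v1 v2 by (simp add: algebra_simps) linarith
  thus ?thesis by blast
qed


definition Pc :: "real \<Rightarrow> real \<Rightarrow> real \<Rightarrow> real \<Rightarrow> real \<Rightarrow> real \<Rightarrow> real \<Rightarrow> real \<Rightarrow> complex \<Rightarrow> complex" where
 "Pc a T N g K H \<xi> \<zeta> x = (x + \<i>*\<xi>*T + H*\<zeta>)*(x + \<i>*\<xi>*T + a)*(x+K*\<zeta>) - \<i>*\<xi>*(a*N/T)*(x + \<i>*\<xi>*T)^2 - a*g*\<zeta>*(x + \<i>*\<xi>*T)"

lemma det_symbolA:
  assumes "tan \<theta> \<noteq> 0" "\<rho> \<noteq> 0" "h \<noteq> 0"
  shows "det (mat x - symbolA \<theta> \<alpha> K m n e s \<rho> h \<xi> \<eta>) =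
    Pc (acoef e s \<rho> h) (tan \<theta>) (\<alpha>*n*h*cbar \<theta> m n e s h/\<rho>) (\<alpha>*m*h*cbar \<theta> m n e s h/\<rho>) K (\<alpha>*h) \<xi> (\<xi>\<^sup>2+\<eta>\<^sup>2) x"
proof -
  have t: "complex_of_real (tan \<theta>) \<noteq> 0" "complex_of_real \<rho> \<noteq> 0" "complex_of_real h \<noteq> 0" using assms by auto
  show ?thesis
  unfolding det_3 symbolA_def Let_def Pc_def
  apply (simp add: A0_def A1_def A2_def mat_def)
  using t apply (simp add: field_simps)
  apply (simp add: algebra_simps power2_eq_square)
  done
qed


lemma null_bounded:
  fixes f g :: "nat \<Rightarrow> complex"
  assumes "f \<longlonglongrightarrow> 0" "\<And>k. cmod (g k) \<le> B"
  shows "(\<lambda>k. f k * g k) \<longlonglongrightarrow> 0"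
proof (rule Lim_null_comparison[where g="\<lambda>k. cmod (f k) * B"])
  show "\<forall>\<^sub>F k in sequentially. norm (f k * g k) \<le> cmod (f k) * B"
    by (simp add: norm_mult mult_left_mono assms(2))
  have "(\<lambda>k. cmod (f k) * B) \<longlonglongrightarrow> cmod 0 * B" by (intro tendsto_intros assms)
  then show "(\<lambda>k. cmod (f k) * B) \<longlonglongrightarrow> 0" by simp
qed

lemma cancel_aux:
  fixes al be ga x z :: complex
  assumes "be \<noteq> 0" "ga \<noteq> 0" "x \<noteq> 0" "z \<noteq> 0"
  shows "(al*be*ga/(x*z)) / ((be/x)*ga) = al/z"
  using assms by (simp add: field_simps)

lemma cancel_aux2:
  fixes al be ga x z :: complex
  assumes "al \<noteq> 0" "ga \<noteq> 0" "x \<noteq> 0" "z \<noteq> 0"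
  shows "(al*be*ga/(x*z)) / ((al/x)*ga) = be/z"
  using assms by (simp add: field_simps)

lemma asym:
  fixes \<xi> \<zeta> :: "nat \<Rightarrow> real" and a T N g K H :: real
  assumes a: "a > 0" and T: "T > 0" and nz: "\<And>k. \<xi> k \<noteq> 0" and zge: "\<And>k. (\<xi> k)\<^sup>2 \<le> \<zeta> k"
    and xl: "\<xi> \<longlonglongrightarrow> 0" and ul: "(\<lambda>k. \<zeta> k / \<xi> k) \<longlonglongrightarrow> 0"
  shows "\<exists>l1 l2 l3. (\<forall>k y. Pc a T N g K H (\<xi> k) (\<zeta> k) y = (y - l1 k)*(y - l2 k)*(y - l3 k)) \<and>
     (\<lambda>k. (l1 k - complex_of_real (-(K-g)*\<zeta> k - N*(\<xi> k)\<^sup>2)) / complex_of_real (\<zeta> k)) \<longlonglongrightarrow> 0 \<and>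
     (\<lambda>k. (l2 k - (- \<i> * complex_of_real (\<xi> k * T) - complex_of_real (H * \<zeta> k))) / complex_of_real (\<zeta> k)) \<longlonglongrightarrow> 0 \<and>
     l3 \<longlonglongrightarrow> - complex_of_real a"
proof -
  define x where "x k = complex_of_real (\<xi> k)" for k
  define z where "z k = complex_of_real (\<zeta> k)" for k
  define u where "u k = complex_of_real (\<zeta> k / \<xi> k)" for k
  define b where "b k = complex_of_real ((\<xi> k)\<^sup>2 / \<zeta> k)" for k
  define A where "A = complex_of_real a"
  define TT where "TT = complex_of_real T"
  have zpos: "\<zeta> k > 0" for k using zge[of k] nz[of k] by (smt (verit) zero_less_power2)
  have xnz: "x k \<noteq> 0" for k using nz by (simp add: x_def)
  have znz: "z k \<noteq> 0" for k using zpos[of k] by (simp add: z_def)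
  have Anz: "A \<noteq> 0" using a by (simp add: A_def)
  have Tnz: "TT \<noteq> 0" using T by (simp add: TT_def)
  have xl': "x \<longlonglongrightarrow> 0" using tendsto_of_real[OF xl, where 'a=complex] by (simp add: x_def[abs_def])
  have ul': "u \<longlonglongrightarrow> 0" using tendsto_of_real[OF ul, where 'a=complex] by (simp add: u_def[abs_def])
  have zx: "z k = x k * u k" for k using nz[of k] by (simp add: x_def u_def z_def)
  have zl: "z \<longlonglongrightarrow> 0" using tendsto_mult[OF xl' ul'] by (simp add: zx[abs_def])
  have bb: "cmod (b k) \<le> 1" for k
  proof -
    have "(\<xi> k)\<^sup>2 / \<zeta> k \<le> 1" using zge[of k] zpos[of k] by simp
    moreover have "0 \<le> (\<xi> k)\<^sup>2 / \<zeta> k" using zpos[of k] by simp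
    ultimately show ?thesis by (simp only: b_def norm_of_real)
  qed
  have bx: "b k * z k = x k ^ 2" for k using zpos[of k] by (simp add: b_def z_def x_def)

  define Nc where "Nc = complex_of_real N"
  define Gc where "Gc = complex_of_real g"
  define Kc where "Kc = complex_of_real K"
  define Hc where "Hc = complex_of_real H"
  define sv where "sv = (\<lambda>k. \<i> * x k * TT)"
  define q where "q = (\<lambda>k. Hc * z k)"
  define kap where "kap = (\<lambda>k. Kc * z k)"
  define e0 where "e0 = (\<lambda>k. \<i> * x k * (A * Nc / TT))"
  define c2 where "c2 = (\<lambda>k. 2* sv k + q k + A + kap k - e0 k)"
  define c1 where "c1 = (\<lambda>k. (sv k + q k)*(sv k + A) + kap k*(2* sv k + q k + A) - 2 * sv k * e0 k - A*Gc*z k)"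
  define c0 where "c0 = (\<lambda>k. kap k*(sv k + q k)*(sv k + A) - e0 k * (sv k)^2 - A*Gc*z k * sv k)"
  define P where "P = (\<lambda>k y. Pc a T N g K H (\<xi> k) (\<zeta> k) y)"
  have Pform: "P k y = (y + sv k + q k)*(y + sv k + A)*(y + kap k) - e0 k*(y+sv k)^2 - A*Gc*z k*(y + sv k)" for k y
    unfolding P_def Pc_def sv_def q_def kap_def e0_def x_def z_def A_def TT_def Nc_def Gc_def Kc_def Hc_def
    by simp
  have Pexp: "P k y = y^3 + c2 k*y^2 + c1 k*y + c0 k" for k y
    unfolding Pform c2_def c1_def c0_def by (simp add: algebra_simps power2_eq_square power3_eq_cube)
  have L2: "c2 \<longlonglongrightarrow> A"
  proof -
    have "c2 \<longlonglongrightarrow> 2*(\<i>*0*TT) + Hc*0 + A + Kc*0 - \<i>*0*(A*Nc/TT)"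
      unfolding c2_def sv_def q_def kap_def e0_def by (intro tendsto_intros xl' zl)
    thus ?thesis by simp
  qed
  have L0: "(\<lambda>k. c0 k / x k^2) \<longlonglongrightarrow> 0"
  proof -
    have eq: "c0 k / x k^2 = Kc*u k*(\<i>*TT + Hc*u k)*(\<i>*x k*TT + A) - \<i>*x k*(A*Nc/TT)*(\<i>*TT)^2 - A*Gc*u k*\<i>*TT" for k
      unfolding c0_def sv_def q_def kap_def e0_def zx using xnz[of k] Tnz
      by (simp add: field_simps power2_eq_square)
    have "(\<lambda>k. Kc*u k*(\<i>*TT + Hc*u k)*(\<i>*x k*TT + A) - \<i>*x k*(A*Nc/TT)*(\<i>*TT)^2 - A*Gc*u k*\<i>*TT)
       \<longlonglongrightarrow> Kc*0*(\<i>*TT + Hc*0)*(\<i>*0*TT + A) - \<i>*0*(A*Nc/TT)*(\<i>*TT)^2 - A*Gc*0*\<i>*TT"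
      by (intro tendsto_intros xl' ul')
    thus ?thesis unfolding eq by simp
  qed
  have L1: "(\<lambda>k. c1 k / x k) \<longlonglongrightarrow> \<i>*TT*A"
  proof -
    have eq: "c1 k / x k = (\<i>*TT + Hc*u k)*(\<i>*x k*TT + A) + Kc*u k*(2*\<i>*x k*TT + Hc*z k + A) - 2*\<i>*TT*(\<i>*x k*(A*Nc/TT)) - A*Gc*u k" for k
      unfolding c1_def sv_def q_def kap_def e0_def zx using xnz[of k] Tnz
      by (simp add: field_simps power2_eq_square)
    have "(\<lambda>k. (\<i>*TT + Hc*u k)*(\<i>*x k*TT + A) + Kc*u k*(2*\<i>*x k*TT + Hc*z k + A) - 2*\<i>*TT*(\<i>*x k*(A*Nc/TT)) - A*Gc*u k)
       \<longlonglongrightarrow> (\<i>*TT + Hc*0)*(\<i>*0*TT + A) + Kc*0*(2*\<i>*0*TT + Hc*0 + A) - 2*\<i>*TT*(\<i>*0*(A*Nc/TT)) - A*Gc*0"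
      by (intro tendsto_intros xl' ul' zl)
    thus ?thesis unfolding eq by simp
  qed

  have Qx: "\<forall>k. \<exists>r. cmod (fst r) \<le> cmod (fst (snd r)) \<and> cmod (fst (snd r)) \<le> cmod (snd (snd r)) \<and>
     c2 k = -(fst r + fst (snd r) + snd (snd r)) \<and> c1 k = fst r * fst (snd r) + fst r * snd (snd r) + fst (snd r) * snd (snd r)
     \<and> c0 k = -(fst r * fst (snd r) * snd (snd r))"
  proof
    fix k
    obtain r1 r2 r3 where "cmod r1 \<le> cmod r2 \<and> cmod r2 \<le> cmod r3 \<and>
     c2 k = -(r1+r2+r3) \<and> c1 k = r1*r2+r1*r3+r2*r3 \<and> c0 k = -(r1*r2*r3)"
      using cubic_roots by blast
    thus "\<exists>r. cmod (fst r) \<le> cmod (fst (snd r)) \<and> cmod (fst (snd r)) \<le> cmod (snd (snd r)) \<and>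
     c2 k = -(fst r + fst (snd r) + snd (snd r)) \<and> c1 k = fst r * fst (snd r) + fst r * snd (snd r) + fst (snd r) * snd (snd r)
     \<and> c0 k = -(fst r * fst (snd r) * snd (snd r))" by (intro exI[of _ "(r1,r2,r3)"]) simp
  qed
  then obtain rr where rr: "\<forall>k. cmod (fst (rr k)) \<le> cmod (fst (snd (rr k))) \<and> cmod (fst (snd (rr k))) \<le> cmod (snd (snd (rr k))) \<and>
     c2 k = -(fst (rr k) + fst (snd (rr k)) + snd (snd (rr k))) \<and> c1 k = fst (rr k) * fst (snd (rr k)) + fst (rr k) * snd (snd (rr k)) + fst (snd (rr k)) * snd (snd (rr k))
     \<and> c0 k = -(fst (rr k) * fst (snd (rr k)) * snd (snd (rr k)))"
    by metis
  define r1 where "r1 = (\<lambda>k. fst (rr k))"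
  define r2 where "r2 = (\<lambda>k. fst (snd (rr k)))"
  define r3 where "r3 = (\<lambda>k. snd (snd (rr k)))"
  have o12: "cmod (r1 k) \<le> cmod (r2 k)" and o23: "cmod (r2 k) \<le> cmod (r3 k)"
    and v2: "c2 k = -(r1 k + r2 k + r3 k)" and v1: "c1 k = r1 k * r2 k + r1 k * r3 k + r2 k * r3 k"
    and v0: "c0 k = -(r1 k * r2 k * r3 k)" for k
    using rr unfolding r1_def r2_def r3_def by blast+
  have fact: "P k y = (y - r1 k)*(y - r2 k)*(y - r3 k)" for k y
    unfolding Pexp v2 v1 v0 by (simp add: algebra_simps power2_eq_square power3_eq_cube)
  have r3big: "3 * cmod (r3 k) \<ge> cmod (c2 k)" for k
  proof -
    have "cmod (c2 k) \<le> cmod (r1 k) + cmod (r2 k) + cmod (r3 k)"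
      unfolding v2 norm_minus_cancel by (meson norm_triangle_le norm_triangle_ineq add_mono order_refl)
    thus ?thesis using o12[of k] o23[of k] by linarith
  qed
  have evc2: "\<forall>\<^sub>F k in sequentially. cmod (c2 k) > a/2"
  proof -
    have "(\<lambda>k. cmod (c2 k)) \<longlonglongrightarrow> cmod A" using L2 by (rule tendsto_norm)
    moreover have "cmod A = a" using a by (simp add: A_def)
    ultimately have "(\<lambda>k. cmod (c2 k)) \<longlonglongrightarrow> a" by simp
    from order_tendstoD(1)[OF this, of "a/2"] show ?thesis using a by simp
  qed
  have evr3: "\<forall>\<^sub>F k in sequentially. cmod (r3 k) > a/6"
    using evc2 proof eventually_elim
    case (elim k) thus ?case using r3big[of k] by linarith
  qed
  have evr3nz: "\<forall>\<^sub>F k in sequentially. r3 k \<noteq> 0"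
    using evr3 by eventually_elim (use a in auto)
  define pp where "pp = (\<lambda>k. r1 k * r2 k / x k^2)"
  define sg where "sg = (\<lambda>k. (r1 k + r2 k) / x k)"
  have Lpp: "pp \<longlonglongrightarrow> 0"
  proof (rule Lim_null_comparison[where g="\<lambda>k. (6/a) * cmod (c0 k / x k^2)"])
    show "\<forall>\<^sub>F k in sequentially. norm (pp k) \<le> (6/a) * cmod (c0 k / x k^2)"
      using evr3
    proof eventually_elim
      case (elim k)
      have "c0 k / x k^2 = - pp k * r3 k" unfolding pp_def v0 by simp
      hence "cmod (c0 k / x k^2) = cmod (pp k) * cmod (r3 k)" by (simp add: norm_mult)
      moreover have "cmod (pp k) * (a/6) \<le> cmod (pp k) * cmod (r3 k)"
        using elim by (intro mult_left_mono) auto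
      ultimately show ?case using a by (simp add: field_simps)
    qed
    have "(\<lambda>k. (6/a) * cmod (c0 k / x k^2)) \<longlonglongrightarrow> (6/a) * cmod 0"
      by (intro tendsto_intros L0)
    thus "(\<lambda>k. (6/a) * cmod (c0 k / x k^2)) \<longlonglongrightarrow> 0" by simp
  qed
  have r3sg_eq: "r3 k * sg k = c1 k / x k - x k * pp k" for k
    unfolding sg_def pp_def v1 using xnz[of k] by (simp add: field_simps power2_eq_square)
  have Lr3sg: "(\<lambda>k. r3 k * sg k) \<longlonglongrightarrow> \<i>*TT*A"
  proof -
    have "(\<lambda>k. c1 k / x k - x k * pp k) \<longlonglongrightarrow> \<i>*TT*A - 0 * 0"
      by (intro tendsto_intros L1 xl' Lpp)
    thus ?thesis unfolding r3sg_eq by simp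
  qed
  have Lxsg: "(\<lambda>k. x k * sg k) \<longlonglongrightarrow> 0"
  proof (rule Lim_null_comparison[where g="\<lambda>k. cmod (x k) * ((6/a) * cmod (r3 k * sg k))"])
    show "\<forall>\<^sub>F k in sequentially. norm (x k * sg k) \<le> cmod (x k) * ((6/a) * cmod (r3 k * sg k))"
      using evr3
    proof eventually_elim
      case (elim k)
      have "cmod (sg k) * (a/6) \<le> cmod (sg k) * cmod (r3 k)"
        using elim by (intro mult_left_mono) auto
      hence "cmod (sg k) \<le> (6/a) * cmod (r3 k * sg k)" using a by (simp add: field_simps norm_mult)
      hence "cmod (x k) * cmod (sg k) \<le> cmod (x k) * ((6/a) * cmod (r3 k * sg k))"
        by (intro mult_left_mono) auto
      thus ?case by (simp only: norm_mult)
    qed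
    have "(\<lambda>k. cmod (x k) * ((6/a) * cmod (r3 k * sg k))) \<longlonglongrightarrow> cmod 0 * ((6/a) * cmod (\<i>*TT*A))"
      by (intro tendsto_intros xl' Lr3sg)
    thus "(\<lambda>k. cmod (x k) * ((6/a) * cmod (r3 k * sg k))) \<longlonglongrightarrow> 0" by simp
  qed
  have Lr3: "r3 \<longlonglongrightarrow> -A"
  proof -
    have eq: "r3 k = - c2 k - x k * sg k" for k unfolding sg_def v2 using xnz[of k] by simp
    have "(\<lambda>k. - c2 k - x k * sg k) \<longlonglongrightarrow> - A - 0" by (intro tendsto_intros L2 Lxsg)
    thus ?thesis unfolding eq by simp
  qed
  have Lsg: "sg \<longlonglongrightarrow> -\<i>*TT"
  proof -
    have "(\<lambda>k. (r3 k * sg k) / r3 k) \<longlonglongrightarrow> (\<i>*TT*A) / (-A)"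
      using Anz by (intro tendsto_intros Lr3sg Lr3) simp
    moreover have "\<forall>\<^sub>F k in sequentially. (r3 k * sg k) / r3 k = sg k"
      using evr3nz by eventually_elim simp
    ultimately have "sg \<longlonglongrightarrow> (\<i>*TT*A) / (-A)" by (rule Lim_transform_eventually)
    thus ?thesis using Anz by simp
  qed
  define w1 where "w1 = (\<lambda>k. r1 k / x k)"
  define w2 where "w2 = (\<lambda>k. r2 k / x k)"
  have Lw1: "w1 \<longlonglongrightarrow> 0"
  proof (rule Lim_null_comparison[where g="\<lambda>k. sqrt (cmod (pp k))"])
    show "\<forall>\<^sub>F k in sequentially. norm (w1 k) \<le> sqrt (cmod (pp k))"
    proof (rule always_eventually, rule allI)
      fix k
      have "cmod (w1 k) \<le> cmod (w2 k)" unfolding w1_def w2_def using o12[of k] by (simp add: norm_divide divide_right_mono)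
      hence "cmod (w1 k) * cmod (w1 k) \<le> cmod (w1 k) * cmod (w2 k)" by (simp add: mult_left_mono)
      also have "\<dots> = cmod (pp k)" unfolding w1_def w2_def pp_def by (simp add: norm_mult norm_divide power2_eq_square)
      finally have "(cmod (w1 k))\<^sup>2 \<le> cmod (pp k)" by (simp add: power2_eq_square)
      thus "norm (w1 k) \<le> sqrt (cmod (pp k))" by (simp add: real_le_rsqrt)
    qed
    have "(\<lambda>k. sqrt (cmod (pp k))) \<longlonglongrightarrow> sqrt (cmod 0)" by (intro tendsto_intros Lpp)
    thus "(\<lambda>k. sqrt (cmod (pp k))) \<longlonglongrightarrow> 0" by simp
  qed
  have Lw2: "w2 \<longlonglongrightarrow> -\<i>*TT"
  proof -
    have eq: "w2 k = sg k - w1 k" for k unfolding w1_def w2_def sg_def by (simp add: add_divide_distrib)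
    have "(\<lambda>k. sg k - w1 k) \<longlonglongrightarrow> -\<i>*TT - 0" by (intro tendsto_intros Lsg Lw1)
    thus ?thesis unfolding eq by simp
  qed

  have beq: "b k = x k^2 / z k" for k using znz[of k] bx[of k] by (simp add: field_simps)
  have ueq: "u k = z k / x k" for k using xnz[of k] zx[of k] by (simp add: field_simps)
  have bnd: "cmod (c - d * b k) \<le> cmod c + cmod d" for c d k
  proof -
    have "cmod (c - d * b k) \<le> cmod c + cmod (d * b k)" by (rule norm_triangle_ineq4)
    also have "cmod (d * b k) \<le> cmod d" using bb[of k] by (simp add: norm_mult mult_left_le)
    finally show ?thesis by simp
  qed
  define T1 where "T1 = (\<lambda>k. -(Kc - Gc)*z k - Nc*x k^2)"
  define T2 where "T2 = (\<lambda>k. -\<i>*x k*TT - Hc*z k)"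
  have svl: "sv \<longlonglongrightarrow> 0"
  proof -
    have "sv \<longlonglongrightarrow> \<i>*0*TT" unfolding sv_def by (intro tendsto_intros xl')
    thus ?thesis by simp
  qed
  have T1l: "T1 \<longlonglongrightarrow> 0"
  proof -
    have "T1 \<longlonglongrightarrow> -(Kc - Gc)*0 - Nc*0^2" unfolding T1_def by (intro tendsto_intros xl' zl)
    thus ?thesis by simp
  qed
  have E1eq: "P k (T1 k) / (x k * z k) =
      (\<i>*TT*(sv k + T1 k)) * (Gc - Nc*b k)
    + ((A + sv k + T1 k)*(Gc*u k - Nc*x k)) * ((Hc - (Kc-Gc)) - Nc*b k)
    - ((\<i>*A*Nc/TT)*(2 * sv k + T1 k)) * (-(Kc-Gc) - Nc*b k)
    - A*Gc*(-(Kc-Gc)*u k - Nc*x k)" for k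
    unfolding Pform T1_def sv_def q_def kap_def e0_def beq ueq using xnz[of k] znz[of k] Tnz
    by (simp add: field_simps power2_eq_square)
  have E1l: "(\<lambda>k. P k (T1 k) / (x k * z k)) \<longlonglongrightarrow> 0"
  proof -
    have a1: "(\<lambda>k. (\<i>*TT*(sv k + T1 k)) * (Gc - Nc*b k)) \<longlonglongrightarrow> 0"
    proof (rule null_bounded[OF _ bnd])
      have "(\<lambda>k. \<i>*TT*(sv k + T1 k)) \<longlonglongrightarrow> \<i>*TT*(0+0)" by (intro tendsto_intros svl T1l)
      thus "(\<lambda>k. \<i>*TT*(sv k + T1 k)) \<longlonglongrightarrow> 0" by simp
    qed
    have a2: "(\<lambda>k. ((A + sv k + T1 k)*(Gc*u k - Nc*x k)) * ((Hc - (Kc-Gc)) - Nc*b k)) \<longlonglongrightarrow> 0"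
    proof (rule null_bounded[OF _ bnd])
      have "(\<lambda>k. (A + sv k + T1 k)*(Gc*u k - Nc*x k)) \<longlonglongrightarrow> (A+0+0)*(Gc*0 - Nc*0)" by (intro tendsto_intros svl T1l ul' xl')
      thus "(\<lambda>k. (A + sv k + T1 k)*(Gc*u k - Nc*x k)) \<longlonglongrightarrow> 0" by simp
    qed
    have a3: "(\<lambda>k. ((\<i>*A*Nc/TT)*(2 * sv k + T1 k)) * (-(Kc-Gc) - Nc*b k)) \<longlonglongrightarrow> 0"
    proof (rule null_bounded[OF _ bnd])
      have "(\<lambda>k. (\<i>*A*Nc/TT)*(2 * sv k + T1 k)) \<longlonglongrightarrow> (\<i>*A*Nc/TT)*(2*0+0)" by (intro tendsto_intros svl T1l)
      thus "(\<lambda>k. (\<i>*A*Nc/TT)*(2 * sv k + T1 k)) \<longlonglongrightarrow> 0" by simp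
    qed
    have a4: "(\<lambda>k. A*Gc*(-(Kc-Gc)*u k - Nc*x k)) \<longlonglongrightarrow> A*Gc*(-(Kc-Gc)*0 - Nc*0)"
      by (intro tendsto_intros ul' xl')
    have "(\<lambda>k. P k (T1 k) / (x k * z k)) \<longlonglongrightarrow> 0 + 0 - 0 - A*Gc*(-(Kc-Gc)*0 - Nc*0)"
      unfolding E1eq by (intro tendsto_intros a1 a2 a3 a4)
    thus ?thesis by simp
  qed
  have E2l: "(\<lambda>k. P k (T2 k) / (x k * z k)) \<longlonglongrightarrow> 0"
  proof -
    have eq: "P k (T2 k) / (x k * z k) = -(\<i>*A*Nc/TT)*Hc^2*z k + A*Gc*Hc*u k" for k
      unfolding Pform T2_def sv_def q_def kap_def e0_def ueq using xnz[of k] znz[of k] Tnz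
      by (simp add: field_simps power2_eq_square)
    have "(\<lambda>k. -(\<i>*A*Nc/TT)*Hc^2*z k + A*Gc*Hc*u k) \<longlonglongrightarrow> -(\<i>*A*Nc/TT)*Hc^2*0 + A*Gc*Hc*0"
      by (intro tendsto_intros zl ul')
    thus ?thesis unfolding eq by simp
  qed
  define D1 where "D1 = (\<lambda>k. ((T1 k - r2 k)/x k)*(T1 k - r3 k))"
  define D2 where "D2 = (\<lambda>k. ((T2 k - r1 k)/x k)*(T2 k - r3 k))"
  have D1l: "D1 \<longlonglongrightarrow> (\<i>*TT)*A"
  proof -
    have eq: "D1 k = (-(Kc - Gc)*u k - Nc*x k - w2 k)*(T1 k - r3 k)" for k
      unfolding D1_def T1_def w2_def ueq using xnz[of k] by (simp add: field_simps power2_eq_square)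
    have "(\<lambda>k. (-(Kc - Gc)*u k - Nc*x k - w2 k)*(T1 k - r3 k)) \<longlonglongrightarrow> (-(Kc - Gc)*0 - Nc*0 - (-\<i>*TT))*(0 - (-A))"
      by (intro tendsto_intros ul' xl' Lw2 T1l Lr3)
    thus ?thesis unfolding eq by simp
  qed
  have D2l: "D2 \<longlonglongrightarrow> (-\<i>*TT)*A"
  proof -
    have eq: "D2 k = (-\<i>*TT - Hc*u k - w1 k)*(T2 k - r3 k)" for k
      unfolding D2_def T2_def w1_def ueq using xnz[of k] by (simp add: field_simps power2_eq_square)
    have T2l: "T2 \<longlonglongrightarrow> -\<i>*0*TT - Hc*0" unfolding T2_def by (intro tendsto_intros xl' zl)
    have "(\<lambda>k. (-\<i>*TT - Hc*u k - w1 k)*(T2 k - r3 k)) \<longlonglongrightarrow> (-\<i>*TT - Hc*0 - 0)*((-\<i>*0*TT - Hc*0) - (-A))"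
      by (intro tendsto_intros ul' Lw1 T2l Lr3)
    thus ?thesis unfolding eq by simp
  qed
  have ne1: "(\<i>*TT)*A \<noteq> 0" and ne2: "(-\<i>*TT)*A \<noteq> 0" using Tnz Anz by auto
  have F1: "(\<lambda>k. (T1 k - r1 k) / z k) \<longlonglongrightarrow> 0"
  proof -
    have "(\<lambda>k. (P k (T1 k) / (x k * z k)) / D1 k) \<longlonglongrightarrow> 0 / ((\<i>*TT)*A)"
      by (intro tendsto_intros E1l D1l ne1)
    moreover have "\<forall>\<^sub>F k in sequentially. (P k (T1 k) / (x k * z k)) / D1 k = (T1 k - r1 k) / z k"
      using tendsto_imp_eventually_ne[OF D1l ne1]
    proof eventually_elim
      case (elim k)
      hence "T1 k - r2 k \<noteq> 0" "T1 k - r3 k \<noteq> 0" unfolding D1_def by auto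
      thus ?case unfolding fact D1_def using xnz[of k] znz[of k] by (rule cancel_aux)
    qed
    ultimately show ?thesis by (simp add: Lim_transform_eventually)
  qed
  have F2: "(\<lambda>k. (T2 k - r2 k) / z k) \<longlonglongrightarrow> 0"
  proof -
    have "(\<lambda>k. (P k (T2 k) / (x k * z k)) / D2 k) \<longlonglongrightarrow> 0 / ((-\<i>*TT)*A)"
      by (intro tendsto_intros E2l D2l ne2)
    moreover have "\<forall>\<^sub>F k in sequentially. (P k (T2 k) / (x k * z k)) / D2 k = (T2 k - r2 k) / z k"
      using tendsto_imp_eventually_ne[OF D2l ne2]
    proof eventually_elim
      case (elim k)
      hence "T2 k - r1 k \<noteq> 0" "T2 k - r3 k \<noteq> 0" unfolding D2_def by auto
      thus ?case unfolding fact D2_def using xnz[of k] znz[of k] by (rule cancel_aux2)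
    qed
    ultimately show ?thesis by (simp add: Lim_transform_eventually)
  qed
  show ?thesis
  proof (intro exI conjI allI)
    show "Pc a T N g K H (\<xi> k) (\<zeta> k) y = (y - r1 k)*(y - r2 k)*(y - r3 k)" for k y
      using fact[of k y] by (simp add: P_def)
    have "(\<lambda>k. - ((T1 k - r1 k) / z k)) \<longlonglongrightarrow> - 0" by (intro tendsto_intros F1)
    moreover have "- ((T1 k - r1 k) / z k) = (r1 k - complex_of_real (-(K-g)*\<zeta> k - N*(\<xi> k)\<^sup>2)) / complex_of_real (\<zeta> k)" for k
      using zpos[of k] by (simp add: T1_def z_def x_def Kc_def Gc_def Nc_def field_simps)
    ultimately show "(\<lambda>k. (r1 k - complex_of_real (-(K-g)*\<zeta> k - N*(\<xi> k)\<^sup>2)) / complex_of_real (\<zeta> k)) \<longlonglongrightarrow> 0"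
      by simp
    have "(\<lambda>k. - ((T2 k - r2 k) / z k)) \<longlonglongrightarrow> - 0" by (intro tendsto_intros F2)
    moreover have "- ((T2 k - r2 k) / z k) = (r2 k - (- \<i> * complex_of_real (\<xi> k * T) - complex_of_real (H * \<zeta> k))) / complex_of_real (\<zeta> k)" for k
      using zpos[of k] by (simp add: T2_def z_def x_def TT_def Hc_def field_simps)
    ultimately show "(\<lambda>k. (r2 k - (- \<i> * complex_of_real (\<xi> k * T) - complex_of_real (H * \<zeta> k))) / complex_of_real (\<zeta> k)) \<longlonglongrightarrow> 0"
      by simp
    show "r3 \<longlonglongrightarrow> - complex_of_real a" using Lr3 by (simp add: A_def)
  qed
qed

lemma part1:
  fixes \<theta> \<alpha> K m n e s \<rho> h :: real and \<xi>s \<eta>s :: "nat \<Rightarrow> real"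
  assumes "0 < \<theta>" "\<theta> < pi / 2" "0 < e" "0 < s" "0 < \<rho>" "0 < h"
    and nz: "\<forall>k. \<xi>s k \<noteq> 0" and xl: "\<xi>s \<longlonglongrightarrow> 0" and el: "(\<lambda>k. (\<eta>s k)\<^sup>2 / \<xi>s k) \<longlonglongrightarrow> 0"
  shows "\<exists>l1 l2 l3 :: nat \<Rightarrow> complex.
           (\<forall>k x. det (mat x - symbolA \<theta> \<alpha> K m n e s \<rho> h (\<xi>s k) (\<eta>s k))
                   = (x - l1 k) * (x - l2 k) * (x - l3 k)) \<and>
           (\<lambda>k. (l1 k - lead1 \<theta> \<alpha> K m n e s \<rho> h (\<xi>s k) (\<eta>s k))
                 / of_real ((\<xi>s k)\<^sup>2 + (\<eta>s k)\<^sup>2)) \<longlonglongrightarrow> 0 \<and>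
           (\<lambda>k. (l2 k - lead2 \<theta> \<alpha> h (\<xi>s k) (\<eta>s k))
                 / of_real ((\<xi>s k)\<^sup>2 + (\<eta>s k)\<^sup>2)) \<longlonglongrightarrow> 0 \<and>
           l3 \<longlonglongrightarrow> - of_real (acoef e s \<rho> h)"
proof -
  define c where "c = cbar \<theta> m n e s h"
  define N where "N = \<alpha>*n*h*c/\<rho>"
  define g where "g = \<alpha>*m*h*c/\<rho>"
  define \<zeta> where "\<zeta> = (\<lambda>k. (\<xi>s k)\<^sup>2 + (\<eta>s k)\<^sup>2)"
  have apos: "acoef e s \<rho> h > 0" using assms by (simp add: acoef_def)
  have Tpos: "tan \<theta> > 0" using assms by (simp add: tan_gt_zero)
  have ul: "(\<lambda>k. \<zeta> k / \<xi>s k) \<longlonglongrightarrow> 0"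
  proof -
    have eq: "\<zeta> k / \<xi>s k = \<xi>s k + (\<eta>s k)\<^sup>2 / \<xi>s k" for k
      using nz by (simp add: \<zeta>_def field_simps power2_eq_square)
    have "(\<lambda>k. \<xi>s k + (\<eta>s k)\<^sup>2 / \<xi>s k) \<longlonglongrightarrow> 0 + 0" by (intro tendsto_intros xl el)
    thus ?thesis unfolding eq by simp
  qed
  obtain l1 l2 l3 where F: "\<forall>k y. Pc (acoef e s \<rho> h) (tan \<theta>) N g K (\<alpha>*h) (\<xi>s k) (\<zeta> k) y = (y - l1 k)*(y - l2 k)*(y - l3 k)"
    and L1: "(\<lambda>k. (l1 k - complex_of_real (-(K-g)*\<zeta> k - N*(\<xi>s k)\<^sup>2)) / complex_of_real (\<zeta> k)) \<longlonglongrightarrow> 0"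
    and L2: "(\<lambda>k. (l2 k - (- \<i> * complex_of_real (\<xi>s k * tan \<theta>) - complex_of_real (\<alpha>*h * \<zeta> k))) / complex_of_real (\<zeta> k)) \<longlonglongrightarrow> 0"
    and L3: "l3 \<longlonglongrightarrow> - complex_of_real (acoef e s \<rho> h)"
    using asym[OF apos Tpos, of \<xi>s \<zeta> N g K "\<alpha>*h"] nz xl ul by (auto simp: \<zeta>_def)
  show ?thesis
  proof (intro exI conjI allI)
    show "det (mat x - symbolA \<theta> \<alpha> K m n e s \<rho> h (\<xi>s k) (\<eta>s k)) = (x - l1 k) * (x - l2 k) * (x - l3 k)" for k x
      using det_symbolA[of \<theta> \<rho> h x \<alpha> K m n e s "\<xi>s k" "\<eta>s k"] F Tpos assms
      by (simp add: N_def g_def c_def \<zeta>_def)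
    have "lead1 \<theta> \<alpha> K m n e s \<rho> h (\<xi>s k) (\<eta>s k) = complex_of_real (-(K-g)*\<zeta> k - N*(\<xi>s k)\<^sup>2)" for k
      unfolding lead1_def Let_def N_def g_def c_def \<zeta>_def using assms by (simp add: field_simps)
    thus "(\<lambda>k. (l1 k - lead1 \<theta> \<alpha> K m n e s \<rho> h (\<xi>s k) (\<eta>s k)) / of_real ((\<xi>s k)\<^sup>2 + (\<eta>s k)\<^sup>2)) \<longlonglongrightarrow> 0"
      using L1 by (simp add: \<zeta>_def)
    have "lead2 \<theta> \<alpha> h (\<xi>s k) (\<eta>s k) = - \<i> * complex_of_real (\<xi>s k * tan \<theta>) - complex_of_real (\<alpha>*h * \<zeta> k)" for k
      unfolding lead2_def \<zeta>_def by (simp add: mult.assoc)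
    thus "(\<lambda>k. (l2 k - lead2 \<theta> \<alpha> h (\<xi>s k) (\<eta>s k)) / of_real ((\<xi>s k)\<^sup>2 + (\<eta>s k)\<^sup>2)) \<longlonglongrightarrow> 0"
      using L2 by (simp add: \<zeta>_def)
    show "l3 \<longlonglongrightarrow> - of_real (acoef e s \<rho> h)" by (rule L3)
  qed
qed

theorem proposition4p2:
  fixes \<theta> \<alpha> K m n e s \<rho> h :: real
  assumes "0 < \<theta>" "\<theta> < pi / 2" "0 < \<alpha>" "0 \<le> K" "0 < m" "0 < n" "0 < e" "0 < s"
    and "0 < \<rho>" "0 < h"
    and hK: "K < \<alpha> * m * h * cbar \<theta> m n e s h / \<rho>"
  shows
    "(\<forall>\<xi>s \<eta>s :: nat \<Rightarrow> real.
        (\<forall>k. \<xi>s k \<noteq> 0) \<and> \<xi>s \<longlonglongrightarrow> 0 \<and> \<eta>s \<longlonglongrightarrow> 0 \<and> (\<lambda>k. (\<eta>s k)\<^sup>2 / \<xi>s k) \<longlonglongrightarrow> 0 \<longrightarrow>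
        (\<exists>l1 l2 l3 :: nat \<Rightarrow> complex.
           (\<forall>k x. det (mat x - symbolA \<theta> \<alpha> K m n e s \<rho> h (\<xi>s k) (\<eta>s k))
                   = (x - l1 k) * (x - l2 k) * (x - l3 k)) \<and>
           (\<lambda>k. (l1 k - lead1 \<theta> \<alpha> K m n e s \<rho> h (\<xi>s k) (\<eta>s k))
                 / of_real ((\<xi>s k)\<^sup>2 + (\<eta>s k)\<^sup>2)) \<longlonglongrightarrow> 0 \<and>
           (\<lambda>k. (l2 k - lead2 \<theta> \<alpha> h (\<xi>s k) (\<eta>s k))
                 / of_real ((\<xi>s k)\<^sup>2 + (\<eta>s k)\<^sup>2)) \<longlonglongrightarrow> 0 \<and>
           l3 \<longlonglongrightarrow> - of_real (acoef e s \<rho> h)))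
     \<and>
     (\<forall>\<xi> \<eta> :: real.
        (Re (lead1 \<theta> \<alpha> K m n e s \<rho> h \<xi> \<eta>) < 0 \<and> Re (lead2 \<theta> \<alpha> h \<xi> \<eta>) < 0
           \<and> - acoef e s \<rho> h < 0)
        \<longleftrightarrow> (K * \<rho> + \<alpha> * h * cbar \<theta> m n e s h * (n - m)) * \<xi>\<^sup>2
              > (\<alpha> * m * h * cbar \<theta> m n e s h - K * \<rho>) * \<eta>\<^sup>2)
     \<and>
     (K < \<alpha> * (m - n) * h * cbar \<theta> m n e s h / \<rho> \<longrightarrow>
        (\<forall>\<xi>s \<eta>s :: nat \<Rightarrow> real.
           (\<forall>k. \<xi>s k \<noteq> 0) \<and> \<xi>s \<longlonglongrightarrow> 0 \<and> \<eta>s \<longlonglongrightarrow> 0 \<and> (\<lambda>k. (\<eta>s k)\<^sup>2 / \<xi>s k) \<longlonglongrightarrow> 0 \<longrightarrow>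
           (\<forall>\<^sub>F k in sequentially.
              \<not> spectrally_stable (symbolA \<theta> \<alpha> K m n e s \<rho> h (\<xi>s k) (\<eta>s k)))))"
proof -
  define c where "c = cbar \<theta> m n e s h"
  have apos: "acoef e s \<rho> h > 0" using assms by (simp add: acoef_def)
  have P1: "\<forall>\<xi>s \<eta>s :: nat \<Rightarrow> real.
        (\<forall>k. \<xi>s k \<noteq> 0) \<and> \<xi>s \<longlonglongrightarrow> 0 \<and> \<eta>s \<longlonglongrightarrow> 0 \<and> (\<lambda>k. (\<eta>s k)\<^sup>2 / \<xi>s k) \<longlonglongrightarrow> 0 \<longrightarrow>
        (\<exists>l1 l2 l3 :: nat \<Rightarrow> complex.
           (\<forall>k x. det (mat x - symbolA \<theta> \<alpha> K m n e s \<rho> h (\<xi>s k) (\<eta>s k))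
                   = (x - l1 k) * (x - l2 k) * (x - l3 k)) \<and>
           (\<lambda>k. (l1 k - lead1 \<theta> \<alpha> K m n e s \<rho> h (\<xi>s k) (\<eta>s k))
                 / of_real ((\<xi>s k)\<^sup>2 + (\<eta>s k)\<^sup>2)) \<longlonglongrightarrow> 0 \<and>
           (\<lambda>k. (l2 k - lead2 \<theta> \<alpha> h (\<xi>s k) (\<eta>s k))
                 / of_real ((\<xi>s k)\<^sup>2 + (\<eta>s k)\<^sup>2)) \<longlonglongrightarrow> 0 \<and>
           l3 \<longlonglongrightarrow> - of_real (acoef e s \<rho> h))"
    using part1[of \<theta> e s \<rho> h] assms by blast
  have RL1: "Re (lead1 \<theta> \<alpha> K m n e s \<rho> h \<xi> \<eta>) = - (K + \<alpha>*n*h*c/\<rho> - \<alpha>*m*h*c/\<rho>) * \<xi>\<^sup>2 - (K - \<alpha>*m*h*c/\<rho>) * \<eta>\<^sup>2" for \<xi> \<eta>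
    unfolding lead1_def Let_def c_def by simp
  have RL2: "Re (lead2 \<theta> \<alpha> h \<xi> \<eta>) = - (\<alpha>*h*(\<xi>\<^sup>2+\<eta>\<^sup>2))" for \<xi> \<eta>
    unfolding lead2_def by simp
  have P2: "\<forall>\<xi> \<eta> :: real.
        (Re (lead1 \<theta> \<alpha> K m n e s \<rho> h \<xi> \<eta>) < 0 \<and> Re (lead2 \<theta> \<alpha> h \<xi> \<eta>) < 0
           \<and> - acoef e s \<rho> h < 0)
        \<longleftrightarrow> (K * \<rho> + \<alpha> * h * cbar \<theta> m n e s h * (n - m)) * \<xi>\<^sup>2
              > (\<alpha> * m * h * cbar \<theta> m n e s h - K * \<rho>) * \<eta>\<^sup>2"
  proof (intro allI)
    fix \<xi> \<eta> :: real
    have k: "Re (lead1 \<theta> \<alpha> K m n e s \<rho> h \<xi> \<eta>) = - (((K * \<rho> + \<alpha> * h * c * (n - m)) * \<xi>\<^sup>2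
              - (\<alpha> * m * h * c - K * \<rho>) * \<eta>\<^sup>2) / \<rho>)"
      unfolding RL1 using assms by (simp add: field_simps)
    have i1: "Re (lead1 \<theta> \<alpha> K m n e s \<rho> h \<xi> \<eta>) < 0 \<longleftrightarrow> (K * \<rho> + \<alpha> * h * c * (n - m)) * \<xi>\<^sup>2
              > (\<alpha> * m * h * c - K * \<rho>) * \<eta>\<^sup>2"
      unfolding k using assms by (simp add: divide_pos_pos) (smt (verit) divide_pos_pos divide_nonpos_pos)
    have i2: "Re (lead1 \<theta> \<alpha> K m n e s \<rho> h \<xi> \<eta>) < 0 \<Longrightarrow> Re (lead2 \<theta> \<alpha> h \<xi> \<eta>) < 0"
    proof -
      assume h1: "Re (lead1 \<theta> \<alpha> K m n e s \<rho> h \<xi> \<eta>) < 0"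
      have "\<xi> \<noteq> 0 \<or> \<eta> \<noteq> 0" using h1 unfolding RL1 by auto
      hence "\<xi>\<^sup>2 + \<eta>\<^sup>2 > 0" by (simp add: sum_power2_gt_zero_iff)
      thus ?thesis unfolding RL2 using assms by simp
    qed
    show "(Re (lead1 \<theta> \<alpha> K m n e s \<rho> h \<xi> \<eta>) < 0 \<and> Re (lead2 \<theta> \<alpha> h \<xi> \<eta>) < 0
           \<and> - acoef e s \<rho> h < 0)
        \<longleftrightarrow> (K * \<rho> + \<alpha> * h * cbar \<theta> m n e s h * (n - m)) * \<xi>\<^sup>2
              > (\<alpha> * m * h * cbar \<theta> m n e s h - K * \<rho>) * \<eta>\<^sup>2"
      using i1 i2 apos by (auto simp: c_def)
  qed
  have P3: "K < \<alpha> * (m - n) * h * cbar \<theta> m n e s h / \<rho> \<longrightarrow>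
        (\<forall>\<xi>s \<eta>s :: nat \<Rightarrow> real.
           (\<forall>k. \<xi>s k \<noteq> 0) \<and> \<xi>s \<longlonglongrightarrow> 0 \<and> \<eta>s \<longlonglongrightarrow> 0 \<and> (\<lambda>k. (\<eta>s k)\<^sup>2 / \<xi>s k) \<longlonglongrightarrow> 0 \<longrightarrow>
           (\<forall>\<^sub>F k in sequentially.
              \<not> spectrally_stable (symbolA \<theta> \<alpha> K m n e s \<rho> h (\<xi>s k) (\<eta>s k))))"
  proof (intro impI allI)
    fix \<xi>s \<eta>s :: "nat \<Rightarrow> real"
    assume hK2: "K < \<alpha> * (m - n) * h * cbar \<theta> m n e s h / \<rho>"
    assume H: "(\<forall>k. \<xi>s k \<noteq> 0) \<and> \<xi>s \<longlonglongrightarrow> 0 \<and> \<eta>s \<longlonglongrightarrow> 0 \<and> (\<lambda>k. (\<eta>s k)\<^sup>2 / \<xi>s k) \<longlonglongrightarrow> 0"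
    then obtain l1 l2 l3 where F: "\<forall>k x. det (mat x - symbolA \<theta> \<alpha> K m n e s \<rho> h (\<xi>s k) (\<eta>s k))
                   = (x - l1 k) * (x - l2 k) * (x - l3 k)"
      and L1: "(\<lambda>k. (l1 k - lead1 \<theta> \<alpha> K m n e s \<rho> h (\<xi>s k) (\<eta>s k))
                 / of_real ((\<xi>s k)\<^sup>2 + (\<eta>s k)\<^sup>2)) \<longlonglongrightarrow> 0"
      using P1 by blast
    define d1 where "d1 = -(K + \<alpha>*n*h*c/\<rho> - \<alpha>*m*h*c/\<rho>)"
    define d2 where "d2 = -(K - \<alpha>*m*h*c/\<rho>)"
    have h0: "K*\<rho> + \<alpha>*h*n*c < \<alpha>*h*m*c" using hK2 assms by (simp add: field_simps c_def)
    have "d1 = (\<alpha>*h*m*c - (K*\<rho> + \<alpha>*h*n*c))/\<rho>" unfolding d1_def using assms by (simp add: field_simps)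
    hence d1p: "d1 > 0" using h0 assms by simp
    have d2p: "d2 > 0" using hK assms unfolding d2_def c_def by simp
    define \<delta> where "\<delta> = min d1 d2"
    have dp: "\<delta> > 0" using d1p d2p by (simp add: \<delta>_def)
    have "(\<lambda>k. cmod ((l1 k - lead1 \<theta> \<alpha> K m n e s \<rho> h (\<xi>s k) (\<eta>s k))
                 / of_real ((\<xi>s k)\<^sup>2 + (\<eta>s k)\<^sup>2))) \<longlonglongrightarrow> cmod 0"
      by (intro tendsto_intros L1)
    from order_tendstoD(2)[OF this, of \<delta>] dp
    have ev: "\<forall>\<^sub>F k in sequentially. cmod ((l1 k - lead1 \<theta> \<alpha> K m n e s \<rho> h (\<xi>s k) (\<eta>s k))
                 / of_real ((\<xi>s k)\<^sup>2 + (\<eta>s k)\<^sup>2)) < \<delta>" by simp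
    show "\<forall>\<^sub>F k in sequentially. \<not> spectrally_stable (symbolA \<theta> \<alpha> K m n e s \<rho> h (\<xi>s k) (\<eta>s k))"
      using ev
    proof eventually_elim
      case (elim k)
      define Z where "Z = (\<xi>s k)\<^sup>2 + (\<eta>s k)\<^sup>2"
      have Zp: "Z > 0" using H unfolding Z_def by (simp add: sum_power2_gt_zero_iff)
      define D where "D = l1 k - lead1 \<theta> \<alpha> K m n e s \<rho> h (\<xi>s k) (\<eta>s k)"
      have "cmod (D / complex_of_real Z) = cmod D / \<bar>Z\<bar>" by (simp only: norm_divide norm_of_real)
      hence "cmod D / Z < \<delta>" using elim Zp by (simp add: D_def Z_def)
      hence D: "cmod D < \<delta> * Z" using Zp by (simp add: field_simps)
      have "Re (lead1 \<theta> \<alpha> K m n e s \<rho> h (\<xi>s k) (\<eta>s k)) = d1 * (\<xi>s k)\<^sup>2 + d2 * (\<eta>s k)\<^sup>2"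
        unfolding RL1 d1_def d2_def by (simp add: algebra_simps)
      also have "\<dots> \<ge> \<delta> * (\<xi>s k)\<^sup>2 + \<delta> * (\<eta>s k)\<^sup>2"
        by (intro add_mono mult_right_mono) (auto simp: \<delta>_def)
      finally have R: "Re (lead1 \<theta> \<alpha> K m n e s \<rho> h (\<xi>s k) (\<eta>s k)) \<ge> \<delta> * Z"
        by (simp add: Z_def algebra_simps)
      have "Re (l1 k) = Re (lead1 \<theta> \<alpha> K m n e s \<rho> h (\<xi>s k) (\<eta>s k)) + Re D" by (simp add: D_def)
      moreover have "Re D \<ge> - cmod D" using abs_Re_le_cmod[of D] by linarith
      ultimately have "Re (l1 k) > 0" using R D by linarith
      moreover have "det (mat (l1 k) - symbolA \<theta> \<alpha> K m n e s \<rho> h (\<xi>s k) (\<eta>s k)) = 0"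
        using F by simp
      ultimately show ?case unfolding spectrally_stable_def by force
    qed
  qed
  show ?thesis using P1 P2 P3 by blast
qed

end
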